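(* Let $p$ be an odd prime and let $(P_n)_{n\ge0}$ be the Catalan-Larcombe-French numbers. Then for all integers $n$ with $0\le n\le p-1$, $$128^nP_{p-1-n}\equiv(-1)^{\frac{p-1}{2}}P_n\pmod{p}.$$ In particular, for $0\le n\le p-1$, $p\mid P_n$ if and only if $p\mid P_{p-1-n}$.
   Context: The Catalan-Larcombe-French numbers are defined by $P_0=1$, $P_1=8$ and, for $n\ge 2$, $n^2P_n-8(3n^2-3n+1)P_{n-1}+128(n-1)^2P_{n-2}=0$. *)

theory Defs
  imports "HOL-Number_Theory.Number_Theory"
begin

text \<open>Catalan-Larcombe-French numbers: P 0 = 1, P 1 = 8 and for n \<ge> 2,
  n^2 P n = 8(3n^2-3n+1) P (n-1) - 128 (n-1)^2 P (n-2).
  The numbers are integers (the division below is exact).\<close>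
fun CLF :: "nat \<Rightarrow> int" where
  "CLF 0 = 1"
| "CLF (Suc 0) = 8"
| "CLF (Suc (Suc m)) =
     (8 * (3 * int (m+2)^2 - 3 * int (m+2) + 1) * CLF (Suc m)
      - 128 * int (m+1)^2 * CLF m) div (int (m+2))^2"

end

theory Submission
  imports Defs
begin

lemma fracI: "(b::real) \<noteq> 0 \<Longrightarrow> d \<noteq> 0 \<Longrightarrow> a*d = c*b \<Longrightarrow> a/b = c/d"
  by (simp add: frac_eq_eq)

definition f :: "nat \<Rightarrow> nat \<Rightarrow> real" where
  "f j m = fact (j+m) * fact (2*j) * fact (2*m) / (fact j ^ 3 * fact m ^ 3)"

lemma f_m: "f j (Suc m) = 2*(real j+real m+1)*(2*real m+1)/(real m+1)^2 * f j m"
proof -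
  have a: "fact (j + Suc m) = (real (j+m+1)) * fact (j+m)"
    by (simp add: fact_Suc)
  have b: "(fact (2 * Suc m)::real) = (2*m+2)*(2*m+1) * fact (2*m)"
    by (simp add: fact_Suc algebra_simps)
  have c: "(fact (Suc m)::real) = (real m+1) * fact m" by (simp add: fact_Suc algebra_simps)
  have nz: "(fact j::real) \<noteq> 0" "(fact m::real) \<noteq> 0" "real m + 1 \<noteq> 0" "real j + 1 \<noteq> 0"
    by (auto simp del: of_nat_Suc)
  show ?thesis unfolding f_def a b c times_divide_times_eq using nz
    apply (intro fracI)
    apply (simp_all only: mult_eq_0_iff power_eq_0_iff de_Morgan_disj)
      apply (simp_all add: nz)
    by (simp add: power2_eq_square power3_eq_cube algebra_simps)
qed

lemma f_j: "f (Suc j) m = 2*(real j+real m+1)*(2*real j+1)/(real j+1)^2 * f j m"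
proof -
  have a: "fact (Suc j + m) = (real (j+m+1)) * fact (j+m)"
    by (simp add: fact_Suc)
  have b: "(fact (2 * Suc j)::real) = (2*j+2)*(2*j+1) * fact (2*j)"
    by (simp add: fact_Suc algebra_simps)
  have c: "(fact (Suc j)::real) = (real j+1) * fact j" by (simp add: fact_Suc algebra_simps)
  have nz: "(fact j::real) \<noteq> 0" "(fact m::real) \<noteq> 0" "real m + 1 \<noteq> 0" "real j + 1 \<noteq> 0"
    by (auto simp del: of_nat_Suc)
  show ?thesis unfolding f_def a b c times_divide_times_eq using nz
    apply (intro fracI)
    apply (simp_all only: mult_eq_0_iff power_eq_0_iff de_Morgan_disj)
      apply (simp_all add: nz)
    by (simp add: power2_eq_square power3_eq_cube algebra_simps)
qed

definition r :: "real \<Rightarrow> real \<Rightarrow> real" where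
  "r n j = -2*j+3*n+2*n*j-2*n^2"

definition G :: "nat \<Rightarrow> nat \<Rightarrow> real" where
  "G N j = (real j)^2 * r (real N+2) (real j) * f j (N+2-j) /
      ((real N+2) * (2*real (N+2-j)-1))"

lemma G_step:
  fixes j mm :: nat
  defines "x \<equiv> real j" and "y \<equiv> real mm"
  defines "n \<equiv> x + y + 2"
  shows "G (j+mm) (Suc j) - G (j+mm) j =
     n^2 * f j (mm+2) - 4*(3*n^2 - 3*n+1) * f j (mm+1) + 32*(n-1)^2 * f j mm"
proof -
  have x0: "x \<ge> 0" and y0: "y \<ge> 0" unfolding x_def y_def by auto
  have n0: "n > 0" unfolding n_def using x0 y0 by simp
  define F where "F = f j mm"
  define f1 where "f1 = f j (mm+1)"
  have A: "f1 = 2*(x+y+1)*(2*y+1)/(y+1)^2 * F"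
    unfolding f1_def F_def x_def y_def using f_m[of j mm] by simp
  have B: "f j (mm+2) = 2*n*(2*y+3)/(y+2)^2 * f1"
    unfolding f1_def n_def x_def y_def using f_m[of j "Suc mm"] by (simp add: algebra_simps)
  have C: "f (Suc j) (Suc mm) = 2*n*(2*x+1)/(x+1)^2 * f1"
    unfolding f1_def n_def x_def y_def using f_j[of j "Suc mm"] by (simp add: algebra_simps)
  have G0: "G (j+mm) j = 2*x^2 * r n x / (y+2)^2 * f1"
  proof -
    have e: "j + mm + 2 - j = mm + 2" by simp
    have "G (j+mm) j = x^2 * r n x * f j (mm+2) / (n * (2*(y+2)-1))"
      unfolding G_def e x_def y_def n_def by (simp add: algebra_simps)
    also have "\<dots> = 2*x^2 * r n x / (y+2)^2 * f1"
    proof -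
      have e2: "2*(y+2)-1 = 2*y+3" by simp
      have nz: "2*y+3 \<noteq> 0" "y+2 \<noteq> 0" "n \<noteq> 0" using y0 n0 by auto
      show ?thesis unfolding B e2
        apply (simp only: times_divide_eq_right times_divide_eq_left divide_divide_eq_left)
        apply (rule fracI)
        using nz apply simp
        using nz apply simp
        by (simp add: algebra_simps)
    qed
    finally show ?thesis .
  qed
  have G1: "G (j+mm) (Suc j) = 2*(2*x+1) * r n (x+1) / (2*y+1) * f1"
  proof -
    have e: "j + mm + 2 - Suc j = Suc mm" by simp
    have "G (j+mm) (Suc j) = (x+1)^2 * r n (x+1) * f (Suc j) (Suc mm) / (n * (2*(y+1)-1))"
      unfolding G_def e x_def y_def n_def by (simp add: algebra_simps)
    also have "\<dots> = 2*(2*x+1) * r n (x+1) / (2*y+1) * f1"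
    proof -
      have e2: "2*(y+1)-1 = 2*y+1" by simp
      have nz: "2*y+1 \<noteq> 0" "x+1 \<noteq> 0" "n \<noteq> 0" using y0 x0 n0 by auto
      show ?thesis unfolding C e2
        apply (simp only: times_divide_eq_right times_divide_eq_left divide_divide_eq_left)
        apply (rule fracI)
        using nz apply simp
        using nz apply simp
        by (simp add: algebra_simps)
    qed
    finally show ?thesis .
  qed
  have P: "4*(2*x+1)*r n (x+1)*(x+y+1)*(y+2)^2 - 4*x^2*r n x*(x+y+1)*(2*y+1)
     = n^2*2*n*(2*y+3)*2*(x+y+1)*(2*y+1) - 4*(3*n^2-3*n+1)*2*(x+y+1)*(2*y+1)*(y+2)^2
       + 32*(n-1)^2*(y+1)^2*(y+2)^2"
    unfolding r_def n_def by (simp add: algebra_simps power2_eq_square)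
  have L: "G (j+mm) (Suc j) - G (j+mm) j =
     (4*(2*x+1)*r n (x+1)*(x+y+1)*(y+2)^2 - 4*x^2*r n x*(x+y+1)*(2*y+1)) / ((y+1)^2*(y+2)^2) * F"
  proof -
    have nz: "2*y+1 \<noteq> 0" "y+1 \<noteq> 0" "1+y \<noteq> 0" "y+2 \<noteq> 0" "2+y \<noteq> 0" using y0 by auto
    have G1': "G (j+mm) (Suc j) = 4*(2*x+1)*r n (x+1)*(x+y+1)/(y+1)^2 * F"
      unfolding G1 A
      apply (simp only: times_divide_eq_right times_divide_eq_left divide_divide_eq_left)
      apply (rule fracI)
      using nz apply simp
      using nz apply simp
      by (simp add: algebra_simps)
    show ?thesis unfolding G1' G0 A using nz by (simp add: field_simps)
  qed
  have R: "n^2 * f j (mm+2) - 4*(3*n^2 - 3*n+1) * f j (mm+1) + 32*(n-1)^2 * f j mm =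
     (n^2*2*n*(2*y+3)*2*(x+y+1)*(2*y+1) - 4*(3*n^2-3*n+1)*2*(x+y+1)*(2*y+1)*(y+2)^2
       + 32*(n-1)^2*(y+1)^2*(y+2)^2) / ((y+1)^2*(y+2)^2) * F"
    unfolding B f1_def[symmetric] F_def[symmetric] A using y0 by (simp add: field_simps)
  show ?thesis unfolding L R P ..
qed


lemma tele: "(\<Sum>j\<le>N. g (Suc j) - g j) = g (Suc N) - (g 0::real)"
  by (induction N) auto

definition Ar :: "nat \<Rightarrow> real" where "Ar n = (\<Sum>j\<le>n. f j (n-j))"

lemma Ar_rec:
  fixes N :: nat
  defines "n \<equiv> real N + 2"
  shows "n^2 * Ar (N+2) - 4*(3*n^2-3*n+1) * Ar (N+1) + 32*(n-1)^2 * Ar N = 0"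
proof -
  define c1 where "c1 = 4*(3*n^2-3*n+1)"
  define c2 where "c2 = 32*(n-1)^2"
  have S2: "Ar (N+2) = (\<Sum>j\<le>N. f j (N-j+2)) + f (N+1) 1 + f (N+2) 0"
  proof -
    have "Ar (N+2) = (\<Sum>j\<le>N. f j (N+2-j)) + f (N+1) 1 + f (N+2) 0"
      unfolding Ar_def by (simp add: numeral_2_eq_2)
    moreover have "(\<Sum>j\<le>N. f j (N+2-j)) = (\<Sum>j\<le>N. f j (N-j+2))"
      by (rule sum.cong) (auto simp: Suc_diff_le)
    ultimately show ?thesis by simp
  qed
  have S1: "Ar (N+1) = (\<Sum>j\<le>N. f j (N-j+1)) + f (N+1) 0"
  proof -
    have "Ar (N+1) = (\<Sum>j\<le>N. f j (N+1-j)) + f (N+1) 0"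
      unfolding Ar_def by simp
    moreover have "(\<Sum>j\<le>N. f j (N+1-j)) = (\<Sum>j\<le>N. f j (N-j+1))"
      by (rule sum.cong) (auto simp: Suc_diff_le)
    ultimately show ?thesis by simp
  qed
  have T: "(\<Sum>j\<le>N. n^2 * f j (N-j+2) - c1 * f j (N-j+1) + c2 * f j (N-j)) = G N (Suc N) - G N 0"
  proof -
    have "(\<Sum>j\<le>N. n^2 * f j (N-j+2) - c1 * f j (N-j+1) + c2 * f j (N-j))
        = (\<Sum>j\<le>N. G N (Suc j) - G N j)"
    proof (rule sum.cong)
      fix j assume "j \<in> {..N}"
      then have jN: "j + (N - j) = N" by simp
      have "real j + real (N-j) + 2 = n" unfolding n_def using jN
        by (metis of_nat_add)
      then show "n^2 * f j (N-j+2) - c1 * f j (N-j+1) + c2 * f j (N-j) = G N (Suc j) - G N j"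
        using G_step[of j "N-j"] unfolding jN c1_def c2_def by simp
    qed simp
    then show ?thesis using tele[of "G N" N] by simp
  qed
  have G00: "G N 0 = 0" unfolding G_def by simp
  define g where "g = f (N+1) 0"
  have n0: "n \<noteq> 0" unfolding n_def by simp
  have e1: "f (N+1) 1 = 2*n*g" unfolding g_def n_def using f_m[of "N+1" 0] by simp
  have e2': "f (N+2) 0 = 2*n*(2*n-1)/n^2 * g" unfolding g_def n_def using f_j[of "N+1" 0]
    by (simp add: algebra_simps)
  have e3: "2*n*(2*n-1)/n^2 = 2*(2*n-1)/n" using n0 by (simp add: power2_eq_square)
  have e2: "f (N+2) 0 = 2*(2*n-1)/n * g" using e2' e3 by simp
  have GN: "G N (Suc N) = 2*(real N+1)^2*(2-n)*g"
  proof -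
    have e: "N + 2 - Suc N = 1" by simp
    have "G N (Suc N) = (real N+1)^2 * r n (real N+1) * f (N+1) 1 / n"
      unfolding G_def e n_def by (simp add: add.commute)
    also have "\<dots> = (real N+1)^2 * r n (real N+1) * 2 * g"
      unfolding e1 using n0 by (simp add: field_simps)
    also have "r n (real N+1) = 2 - n" unfolding r_def n_def by (simp add: algebra_simps power2_eq_square)
    finally show ?thesis by simp
  qed
  have "n^2 * Ar (N+2) - c1 * Ar (N+1) + c2 * Ar N
      = (\<Sum>j\<le>N. n^2 * f j (N-j+2) - c1 * f j (N-j+1) + c2 * f j (N-j))
        + n^2 * (f (N+1) 1 + f (N+2) 0) - c1 * g"
    unfolding S2 S1 g_def by (simp add: Ar_def sum.distrib sum_subtractf sum_distrib_left algebra_simps)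
  also have "\<dots> = G N (Suc N) - G N 0 + n^2 * (f (N+1) 1 + f (N+2) 0) - c1 * g"
    by (simp only: T)
  also have "\<dots> = 0"
    unfolding G00 GN e1 e2 c1_def using n0 unfolding n_def
    by (simp add: field_simps power2_eq_square)
  finally show ?thesis unfolding c1_def c2_def .
qed


definition Ai :: "nat \<Rightarrow> int" where
  "Ai n = (\<Sum>j\<le>n. int ((n choose j) * (2*j choose j) * (2*(n-j) choose (n-j))))"

lemma Ai_Ar: "real_of_int (Ai n) = Ar n"
  unfolding Ai_def Ar_def of_int_sum
proof (rule sum.cong)
  fix j assume "j \<in> {..n}"
  then have jn: "j \<le> n" by simp
  have b1: "real (n choose j) = fact n / (fact j * fact (n-j))" using binomial_fact[OF jn] by simp
  have b2: "real (2*j choose j) = fact (2*j) / (fact j * fact j)"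
    using binomial_fact[of j "2*j"] by (simp add: mult_2)
  have b3: "real (2*(n-j) choose (n-j)) = fact (2*(n-j)) / (fact (n-j) * fact (n-j))"
    using binomial_fact[of "n-j" "2*(n-j)"] by (simp add: mult_2)
  have e: "j + (n - j) = n" using jn by simp
  show "real_of_int (int ((n choose j) * (2*j choose j) * (2*(n-j) choose (n-j)))) = f j (n-j)"
    unfolding f_def e using b1 b2 b3
    by (simp add: power3_eq_cube)
qed simp

lemma Ai_rec: "(int N+2)^2 * Ai (N+2) - 4*(3*(int N+2)^2-3*(int N+2)+1) * Ai (N+1)
   + 32*(int N+1)^2 * Ai N = 0"
proof -
  have "real_of_int ((int N+2)^2 * Ai (N+2) - 4*(3*(int N+2)^2-3*(int N+2)+1) * Ai (N+1)
   + 32*(int N+1)^2 * Ai N) = 0"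
    using Ar_rec[of N] unfolding Ai_Ar[symmetric] by (simp add: algebra_simps)
  then show ?thesis by (simp only: of_int_eq_0_iff)
qed

lemma CLF_Ai: "CLF n = 2^n * Ai n"
proof (induction n rule: CLF.induct)
  case 1 then show ?case by (simp add: Ai_def)
next
  case 2 then show ?case by (simp add: Ai_def)
next
  case (3 m)
  have num: "8 * (3 * int (m+2)^2 - 3 * int (m+2) + 1) * CLF (Suc m) - 128 * int (m+1)^2 * CLF m
     = (int (m+2))^2 * (2^(m+2) * Ai (m+2))"
  proof -
    have "8 * (3 * int (m+2)^2 - 3 * int (m+2) + 1) * CLF (Suc m) - 128 * int (m+1)^2 * CLF m
      = 2^(m+2) * (4*(3*(int m+2)^2-3*(int m+2)+1) * Ai (m+1) - 32*(int m+1)^2 * Ai m)"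
      unfolding 3 by (simp add: power_add algebra_simps)
    also have "\<dots> = 2^(m+2) * ((int m+2)^2 * Ai (m+2))"
    proof -
    have "(int m+2)^2 * Ai (m+2) = 4*(3*(int m+2)^2-3*(int m+2)+1) * Ai (m+1) - 32*(int m+1)^2 * Ai m"
      using Ai_rec[of m] by linarith
    then show ?thesis by simp
  qed
    finally show ?thesis by (simp add: algebra_simps)
  qed
  have "CLF (Suc (Suc m)) = (int (m+2))^2 * (2^(m+2) * Ai (m+2)) div (int (m+2))^2"
    using num by simp
  also have "\<dots> = 2^(m+2) * Ai (m+2)" by simp
  finally show ?case by (simp add: numeral_2_eq_2)
qed

lemma CLF_rec: "(int (m+2))^2 * CLF (m+2) =
   8 * (3 * int (m+2)^2 - 3 * int (m+2) + 1) * CLF (m+1) - 128 * int (m+1)^2 * CLF m"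
proof -
  have "8 * (3 * int (m+2)^2 - 3 * int (m+2) + 1) * CLF (m+1) - 128 * int (m+1)^2 * CLF m
      = 2^(m+2) * (4*(3*(int m+2)^2-3*(int m+2)+1) * Ai (m+1) - 32*(int m+1)^2 * Ai m)"
    unfolding CLF_Ai by (simp add: power_add algebra_simps)
  also have "\<dots> = 2^(m+2) * ((int m+2)^2 * Ai (m+2))"
  proof -
    have "(int m+2)^2 * Ai (m+2) = 4*(3*(int m+2)^2-3*(int m+2)+1) * Ai (m+1) - 32*(int m+1)^2 * Ai m"
      using Ai_rec[of m] by linarith
    then show ?thesis by simp
  qed
  finally show ?thesis unfolding CLF_Ai by (simp add: algebra_simps)
qed


lemma binom_pm1:
  assumes p: "prime p" and j: "j \<le> p - 1"
  shows "int p dvd (int ((p-1) choose j) - (-1)^j)"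
  using j
proof (induction j)
  case 0 then show ?case by simp
next
  case (Suc j)
  have p1: "p = Suc (p - 1)" using prime_gt_0_nat[OF p] by simp
  have "p dvd (p choose Suc j)"
    by (rule dvd_choose_prime) (use Suc.prems p prime_gt_0_nat[OF p] in auto)
  then have d: "int p dvd int ((p-1) choose j) + int ((p-1) choose Suc j)"
    using binomial_Suc_Suc[of "p-1" j] p1 by (metis of_nat_add of_nat_dvd_iff)
  have ih: "int p dvd (int ((p-1) choose j) - (-1)^j)" using Suc by simp
  have "int ((p-1) choose Suc j) - (-1)^Suc j
      = (int ((p-1) choose j) + int ((p-1) choose Suc j)) - (int ((p-1) choose j) - (-1)^j)"
    by simp
  then show ?case using d ih by (metis dvd_diff)
qed

lemma cb_dvd:
  assumes p: "prime p" and j1: "p \<le> 2*j" and j2: "j < p"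
  shows "p dvd (2*j choose j)"
proof -
  have "fact j * fact (2*j - j) * (2*j choose j) = fact (2*j)"
    by (rule binomial_fact_lemma) simp
  then have e: "fact j * fact j * (2*j choose j) = (fact (2*j) :: nat)" by (simp add: mult_2)
  have "p dvd fact (2*j)" using prime_dvd_fact_iff[OF p] j1 by simp
  then have "p dvd fact j * fact j * (2*j choose j)" using e by simp
  moreover have "\<not> p dvd (fact j :: nat)" using prime_dvd_fact_iff[OF p] j2 by simp
  ultimately show ?thesis using p by (simp add: prime_dvd_mult_iff)
qed

lemma Ai_pm1:
  assumes p: "prime p" and odd: "odd p"
  shows "int p dvd (Ai (p-1) - (-1)^((p-1) div 2))"
proof -
  define h where "h = (p-1) div 2"
  have ph: "p = 2*h+1" unfolding h_def using odd by simp
  define t where "t j = int (((p-1) choose j) * (2*j choose j) * (2*(p-1-j) choose (p-1-j)))" for j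
  have A: "Ai (p-1) = (\<Sum>j\<in>{..p-1}. t j)" unfolding Ai_def t_def by simp
  have hin: "h \<in> {..p-1}" using ph by simp
  have split: "Ai (p-1) = t h + (\<Sum>j\<in>{..p-1} - {h}. t j)"
    unfolding A by (rule sum.remove[OF _ hin]) simp
  have rest: "int p dvd (\<Sum>j\<in>{..p-1} - {h}. t j)"
  proof (rule dvd_sum)
    fix j assume "j \<in> {..p-1} - {h}"
    then have j: "j \<le> p - 1" "j \<noteq> h" by auto
    show "int p dvd t j"
    proof (cases "j < h")
      case True
      have "p dvd (2*(p-1-j) choose (p-1-j))"
        by (rule cb_dvd[OF p]) (use True j ph in auto)
      then show ?thesis unfolding t_def by (simp add: of_nat_dvd_iff[symmetric] del: of_nat_dvd_iff)
    next
      case False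
      have "p dvd (2*j choose j)"
        by (rule cb_dvd[OF p]) (use False j ph in auto)
      then show ?thesis unfolding t_def by (simp add: of_nat_dvd_iff[symmetric] del: of_nat_dvd_iff)
    qed
  qed
  have th: "t h = int ((p-1) choose h) ^ 3"
    unfolding t_def using ph by (simp add: power3_eq_cube)
  have b: "int p dvd (int ((p-1) choose h) - (-1)^h)" by (rule binom_pm1[OF p]) (use ph in simp)
  then obtain k where k: "int ((p-1) choose h) = (-1)^h + int p * k" by (metis dvd_def diff_eq_eq add.commute)
  have "t h - (-1)^h = int p * (3*k*((-1)^h)^2 + 3*k^2*int p*(-1)^h + k^3 * int p ^2)"
    unfolding th k by (simp add: power3_eq_cube power2_eq_square algebra_simps power_mult_distrib[symmetric] flip: power_add)
  then have "int p dvd (t h - (-1)^h)" by simp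
  then have "int p dvd (t h - (-1)^h) + (\<Sum>j\<in>{..p-1} - {h}. t j)" using rest by simp
  then show ?thesis unfolding split h_def[symmetric] by (simp add: algebra_simps)
qed


lemma CLF_pm1:
  assumes p: "prime p" and odd: "odd p"
  shows "int p dvd (CLF (p-1) - (-1)^((p-1) div 2))"
proof -
  have "\<not> p dvd 2"
  proof
    assume "p dvd 2"
    then have "p \<le> 2" by (simp add: dvd_imp_le)
    with prime_ge_2_nat[OF p] have "p = 2" by simp
    with odd show False by simp
  qed
  then have "[2 ^ (p - 1) = 1] (mod p)" by (rule fermat_theorem[OF p])
  then have "[int (2 ^ (p - 1)) = int 1] (mod int p)" by (simp only: cong_int_iff)
  then have f: "int p dvd (2 ^ (p-1) - 1)" by (simp add: cong_iff_dvd_diff)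
  have a: "int p dvd (Ai (p-1) - (-1)^((p-1) div 2))" by (rule Ai_pm1[OF p odd])
  have "CLF (p-1) - (-1)^((p-1) div 2) = (2 ^ (p-1) - 1) * Ai (p-1) + (Ai (p-1) - (-1)^((p-1) div 2))"
    unfolding CLF_Ai by (simp add: algebra_simps)
  moreover have d1: "int p dvd (2 ^ (p-1) - 1) * Ai (p-1)" using f by (rule dvd_mult2)
  ultimately show ?thesis using dvd_add[OF d1 a] by (simp add: add_diff_eq)
qed

lemma alg: fixes Y P A1 A2 k1 k2 Q J :: int shows
 "(J^2 - (Q - J)^2) * Y + (8 * (3 * (Q - J + 1)^2 - 3 * (Q - J + 1) + 1) * (P * A1 + Q * k1) -
      128 * (Q - J + 1)^2 * (P * A2 + Q * k2)) - P * (8 * (3 * J^2 - 3 * J + 1) * A1 - 128 * (J - 1)^2 * A2) =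
  Q * ((2 * J - Q) * Y + 8 * (3 * (Q - J + 1)^2 - 3 * (Q - J + 1) + 1) * k1 +
      8 * (3 * (Q + 2 - 2 * J) - 3) * P * A1 - 128 * (Q - J + 1)^2 * k2 - 128 * (Q + 2 - 2 * J) * P * A2)"
  by (simp add: power2_eq_square algebra_simps)

declare CLF.simps(3)[simp del]

lemma main_cong:
  assumes p: "prime p" and odd: "odd p"
  shows "j \<le> p - 1 \<Longrightarrow> int p dvd (128^j * CLF (p-1-j) - CLF (p-1) * CLF j)"
proof (induction j rule: less_induct)
  case (less j)
  define Q where "Q = int p"
  define P where "P = CLF (p-1)"
  have p3: "p \<ge> 3" using prime_ge_2_nat[OF p] odd by (cases "p = 2") auto
  consider "j = 0" | "j = 1" | "j \<ge> 2" by linarith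
  then show ?case
  proof cases
    case 1 then show ?thesis by simp
  next
    case 2
    have r: "(int ((p-2)+2))^2 * CLF ((p-2)+2) =
      8 * (3 * int ((p-2)+2)^2 - 3 * int ((p-2)+2) + 1) * CLF ((p-2)+1) - 128 * int ((p-2)+1)^2 * CLF (p-2)"
      by (rule CLF_rec)
    have e1: "(p-2)+2 = p" "(p-2)+1 = p-1" using p3 by auto
    have e2: "int (p-1) = Q - 1" unfolding Q_def using p3 by simp
    have r': "Q^2 * CLF p = 8 * (3 * Q^2 - 3 * Q + 1) * P - 128 * (Q-1)^2 * CLF (p-2)"
      using r unfolding e1 e2 Q_def P_def by simp
    have "128^j * CLF (p-1-j) - P * CLF j = 128 * CLF (p-2) - 8 * P"
      using 2 by (simp add: numeral_2_eq_2)
    also have "\<dots> = Q * (8*(3*Q - 3)*P - Q * CLF p - 128*(Q-2)*CLF (p-2))"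
      using r' by (simp add: algebra_simps power2_eq_square)
    finally show ?thesis unfolding Q_def P_def by simp
  next
    case 3
    define m where "m = p - 1 - j"
    have jp: "j \<le> p - 1" using less.prems .
    have em: "m + 2 = p - 1 - (j-2)" "m + 1 = p - 1 - (j-1)" unfolding m_def using 3 jp by auto
    have IH1: "Q dvd (128^(j-1) * CLF (m+1) - P * CLF (j-1))"
      unfolding em Q_def P_def by (rule less.IH) (use 3 jp in auto)
    have IH2: "Q dvd (128^(j-2) * CLF (m+2) - P * CLF (j-2))"
      unfolding em Q_def P_def by (rule less.IH) (use 3 jp in auto)
    obtain k1 where k1: "128^(j-1) * CLF (m+1) - P * CLF (j-1) = Q * k1" using IH1 by (auto simp: dvd_def)
    obtain k2 where k2: "128^(j-2) * CLF (m+2) - P * CLF (j-2) = Q * k2" using IH2 by (auto simp: dvd_def)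
    define J where "J = int j"
    have im1: "int (m+1) = Q - J" and im2: "int (m+2) = Q - J + 1"
      unfolding m_def Q_def J_def using jp 3 by auto
    have rm: "(Q - J + 1)^2 * CLF (m+2) = 8 * (3 * (Q - J + 1)^2 - 3 * (Q - J + 1) + 1) * CLF (m+1)
       - 128 * (Q - J)^2 * CLF m"
      using CLF_rec[of m] unfolding im1 im2 by simp
    have ej: "(j-2) + 2 = j" "(j-2)+1 = j - 1" using 3 by auto
    have ij1: "int (j - 1) = J - 1" and ij2: "int (j-2) + 2 = J" unfolding J_def using 3 by auto
    have rj: "J^2 * CLF j = 8 * (3 * J^2 - 3 * J + 1) * CLF (j-1) - 128 * (J-1)^2 * CLF (j-2)"
      using CLF_rec[of "j-2"] unfolding ej unfolding J_def using ij1 ij2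
      by (simp add: algebra_simps)
    obtain i where ji: "j = i + 2" using 3 by (metis le_add_diff_inverse2)
    have pw1: "(128::int)^j = 128 * 128^(j-1)" unfolding ji by simp
    have pw2: "(128::int)^(j-1) = 128 * 128^(j-2)" unfolding ji by (simp add: numeral_2_eq_2)
    define Y where "Y = 128^j * CLF m"
    define X1 where "X1 = 128^(j-1) * CLF (m+1)"
    define X2 where "X2 = 128^(j-2) * CLF (m+2)"
    define c' where "c' = 8 * (3 * (Q - J + 1)^2 - 3 * (Q - J + 1) + 1)"
    have key: "128 * (Q - J)^2 * Y = 128 * (c' * X1 - 128 * (Q-J+1)^2 * X2)"
    proof -
      have "(Q - J)^2 * Y = 128^(j-1) * (128 * (Q - J)^2 * CLF m)"
        unfolding Y_def pw1 by (simp add: algebra_simps)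
      also have "\<dots> = 128^(j-1) * (c' * CLF (m+1) - (Q - J + 1)^2 * CLF (m+2))"
      proof -
        have "128 * (Q - J)^2 * CLF m = c' * CLF (m+1) - (Q - J + 1)^2 * CLF (m+2)"
          using rm unfolding c'_def by linarith
        then show ?thesis by simp
      qed
      also have "\<dots> = c' * X1 - 128 * (Q-J+1)^2 * X2"
        unfolding X1_def X2_def pw2 by (simp add: algebra_simps)
      finally show ?thesis by simp
    qed
    have key': "(Q - J)^2 * Y = c' * X1 - 128 * (Q-J+1)^2 * X2" using key by simp
    have big: "J^2 * (Y - P * CLF j) = Q * ((2*J - Q) * Y + c' * k1 + 8*(3*(Q+2-2*J) - 3) * P * CLF (j-1)
        - 128 * (Q-J+1)^2 * k2 - 128 * (Q+2-2*J) * P * CLF (j-2))"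
    proof -
      have X1e: "X1 = P * CLF (j-1) + Q * k1" using k1 unfolding X1_def by simp
      have X2e: "X2 = P * CLF (j-2) + Q * k2" using k2 unfolding X2_def by simp
      have "J^2 * (Y - P * CLF j) = J^2 * Y - P * (J^2 * CLF j)" by (simp add: algebra_simps)
      also have "\<dots> = (J^2 - (Q-J)^2) * Y + (c' * X1 - 128 * (Q-J+1)^2 * X2)
          - P * (8 * (3 * J^2 - 3 * J + 1) * CLF (j-1) - 128 * (J-1)^2 * CLF (j-2))"
        unfolding rj key'[symmetric] by (simp add: algebra_simps)
      also have "\<dots> = Q * ((2*J - Q) * Y + c' * k1 + 8*(3*(Q+2-2*J) - 3) * P * CLF (j-1)
        - 128 * (Q-J+1)^2 * k2 - 128 * (Q+2-2*J) * P * CLF (j-2))"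
        unfolding X1e X2e c'_def by (rule alg)
      finally show ?thesis .
    qed
    then have "Q dvd J^2 * (Y - P * CLF j)" by simp
    moreover have "prime Q" unfolding Q_def using p by simp
    moreover have "\<not> Q dvd J"
    proof
      assume "Q dvd J"
      then have "p dvd j" unfolding Q_def J_def by simp
      then have "p \<le> j" using 3 by (simp add: dvd_imp_le)
      then show False using jp p3 by simp
    qed
    ultimately have "Q dvd (Y - P * CLF j)" by (simp add: prime_dvd_mult_iff prime_dvd_power_iff)
    then show ?thesis unfolding Q_def Y_def P_def m_def .
  qed
qed


theorem corollary5:
  fixes p :: nat
  assumes "prime p" and "odd p"
  shows "\<forall>n. n \<le> p - 1 \<longrightarrow>
           [128 ^ n * CLF (p - 1 - n) = (-1) ^ ((p - 1) div 2) * CLF n] (mod int p)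
           \<and> (int p dvd CLF n \<longleftrightarrow> int p dvd CLF (p - 1 - n))"
proof (intro allI impI)
  fix n assume n: "n \<le> p - 1"
  define s :: int where "s = (-1) ^ ((p - 1) div 2)"
  have m: "int p dvd (128^n * CLF (p-1-n) - CLF (p-1) * CLF n)" by (rule main_cong[OF assms n])
  have c: "int p dvd (CLF (p-1) - s)" unfolding s_def by (rule CLF_pm1[OF assms])
  have e: "128^n * CLF (p-1-n) - s * CLF n
      = (128^n * CLF (p-1-n) - CLF (p-1) * CLF n) + CLF n * (CLF (p-1) - s)"
    by (simp add: algebra_simps)
  have D: "int p dvd (128^n * CLF (p-1-n) - s * CLF n)"
    unfolding e using m c by (simp add: dvd_add)
  have pr: "prime (int p)" using assms(1) by simp
  have n128: "\<not> int p dvd 128^n"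
  proof
    assume "int p dvd 128^n"
    then have "int p dvd 128" using pr prime_dvd_power by blast
    then have "int p dvd 2^7" by simp
    then have "int p dvd 2" using pr prime_dvd_power by blast
    then have "p dvd 2" by (metis of_nat_dvd_iff of_nat_numeral)
    then have "p \<le> 2" by (simp add: dvd_imp_le)
    with prime_ge_2_nat[OF assms(1)] have "p = 2" by simp
    with assms(2) show False by simp
  qed
  have s2: "s * s = 1" unfolding s_def by (simp flip: power_add power_mult_distrib)
  have iff: "int p dvd CLF n \<longleftrightarrow> int p dvd CLF (p - 1 - n)"
  proof
    assume h: "int p dvd CLF n"
    then have "int p dvd s * CLF n" by simp
    then have "int p dvd (128^n * CLF (p-1-n) - s * CLF n) + s * CLF n" using D by (rule dvd_add[rotated])
    then have "int p dvd 128^n * CLF (p-1-n)" by simp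
    then show "int p dvd CLF (p-1-n)" using pr n128 by (simp add: prime_dvd_mult_iff)
  next
    assume h: "int p dvd CLF (p-1-n)"
    then have "int p dvd 128^n * CLF (p-1-n)" by simp
    then have "int p dvd 128^n * CLF (p-1-n) - (128^n * CLF (p-1-n) - s * CLF n)" using D by (rule dvd_diff)
    then have "int p dvd s * CLF n" by simp
    then have "int p dvd s * (s * CLF n)" by simp
    then show "int p dvd CLF n" using s2 by (simp add: mult.assoc[symmetric])
  qed
  show "[128 ^ n * CLF (p - 1 - n) = (-1) ^ ((p - 1) div 2) * CLF n] (mod int p)
           \<and> (int p dvd CLF n \<longleftrightarrow> int p dvd CLF (p - 1 - n))"
    using D iff unfolding s_def by (simp add: cong_iff_dvd_diff)
qed

end
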